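(* Let $(X,\Sigma)$ be a measurable space, $\mathcal{E}\subseteq\Sigma$ a paving, and $b\in(0,\infty)$. Let $\boldsymbol{\mu}=(\mu_t)_{t\ge0}$ be a family of monotone measures on $\Sigma$ with $\mu_t(X)=\mu_0(X)<\infty$ for all $t\ge0$, and let $\widehat{\boldsymbol{\mu}}=(\widehat{\mu}_t)_{t\ge0}$ be defined by $\widehat{\mu}_t(E)=\mu_0(X)-\mu_{(b-t)_+}(X\setminus E)$ for $t\ge0$, $E\in\Sigma$. Let $\mathscr{A}=\{\mathsf{A}_t(\cdot|E)\colon E\in\mathcal{E},\,t\ge0\}$ be a parametric family of conditional aggregation operators such that $\mathsf{A}_t(b\mathbf{1}_X|E)=b$ for every $t\ge0$ and every $E\in\mathcal{E}\setminus\{\emptyset\}$, and let $\widehat{\mathscr{A}}=\{\widehat{\mathsf{A}}_t(\cdot|E)\colon E\in\mathcal{E},\,t\ge0\}$ be given by $\widehat{\mathsf{A}}_t(f|E)=b-\mathsf{A}_{(b-t)_+}\big((b\mathbf{1}_X-f)_+\,\big|\,E\big)$ for $E\in\mathcal{E}\setminus\{\emptyset\}$ and $\widehat{\mathsf{A}}_t(\cdot|\emptyset)=0$. Then $$\boldsymbol{\mu}_{\mathscr{A}}(f,t)=\mu_0(X)-\widehat{\boldsymbol{\mu}}^S_{\widehat{\mathscr{A}}}(b\mathbf{1}_X-f,\,b-t)$$ for all $t\in[0,b]$ and all $f\in\mathbf{F}$ with $\sup_{x\in X}f(x)\le b$.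
   Context: $a_+=\max\{a,0\}$. $\mathbf{F}$ denotes the set of all $\Sigma$-measurable, nonnegative, bounded functions $f\colon X\to[0,\infty)$. A monotone measure is a map $\mu\colon\Sigma\to[0,\infty]$ with $\mu(B)\le\mu(C)$ whenever $B\subseteq C$, $\mu(\emptyset)=0$ and $\mu(X)>0$. A paving is a family $\mathcal{E}\subseteq\Sigma$ with $\emptyset\in\mathcal{E}$. For $E\in\Sigma\setminus\{\emptyset\}$, a conditional aggregation operator (CAO) w.r.t. $E$ is a map $\mathsf{A}(\cdot|E)\colon\mathbf{F}\to[0,\infty]$ such that (C1) $\mathsf{A}(f|E)\le\mathsf{A}(g|E)$ whenever $f(x)\le g(x)$ for all $x\in E$, and (C2) $\mathsf{A}(\mathbf{1}_{X\setminus E}|E)=0$. In $\mathscr{A}$, each $\mathsf{A}_t(\cdot|E)$ with $E\ne\emptyset$ is a CAO w.r.t. $E$ and $\mathsf{A}_t(\cdot|\emptyset)=\infty$. The generalized level measure is $\boldsymbol{\mu}_{\mathscr{A}}(f,t)=\sup\{\mu_t(E)\colon \mathsf{A}_t(f|E)\ge t,\ E\in\mathcal{E}\}$. The generalized survival function of $g\in\mathbf{F}$ w.r.t. $\widehat{\mathscr{A}}$ and $\widehat{\boldsymbol{\mu}}$ is $\widehat{\boldsymbol{\mu}}^S_{\widehat{\mathscr{A}}}(g,s)=\inf\{\widehat{\mu}_s(X\setminus E)\colon \widehat{\mathsf{A}}_s(g|E)\le s,\ E\in\mathcal{E}\}$ for $s\ge0$. *)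

theory Defs
  imports "HOL-Analysis.Analysis"
begin

text \<open>Values in [0,\<infinity>] are modelled in ereal (nonnegativity imposed explicitly).
  The measurable space (X,\<Sigma>) is (space M, sets M).\<close>

definition Fset :: "'a measure \<Rightarrow> ('a \<Rightarrow> real) set" where
  "Fset M = {f. f \<in> borel_measurable M \<and> (\<forall>x\<in>space M. 0 \<le> f x)
                 \<and> (\<exists>c. \<forall>x\<in>space M. f x \<le> c)}"

definition monotone_measure :: "'a measure \<Rightarrow> ('a set \<Rightarrow> ereal) \<Rightarrow> bool" where
  "monotone_measure M \<mu> \<longleftrightarrow>
     (\<forall>B\<in>sets M. 0 \<le> \<mu> B) \<and>
     (\<forall>B\<in>sets M. \<forall>C\<in>sets M. B \<subseteq> C \<longrightarrow> \<mu> B \<le> \<mu> C) \<and>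
     \<mu> {} = 0 \<and> \<mu> (space M) > 0"

definition paving :: "'a measure \<Rightarrow> 'a set set \<Rightarrow> bool" where
  "paving M \<E> \<longleftrightarrow> \<E> \<subseteq> sets M \<and> {} \<in> \<E>"

definition CAO :: "'a measure \<Rightarrow> 'a set \<Rightarrow> (('a \<Rightarrow> real) \<Rightarrow> ereal) \<Rightarrow> bool" where
  "CAO M E A \<longleftrightarrow>
     (\<forall>f\<in>Fset M. 0 \<le> A f) \<and>
     (\<forall>f\<in>Fset M. \<forall>g\<in>Fset M. (\<forall>x\<in>E. f x \<le> g x) \<longrightarrow> A f \<le> A g) \<and>
     A (indicator (space M - E)) = 0"

definition param_CAO_family ::
    "'a measure \<Rightarrow> 'a set set \<Rightarrow> (real \<Rightarrow> 'a set \<Rightarrow> ('a \<Rightarrow> real) \<Rightarrow> ereal) \<Rightarrow> bool" where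
  "param_CAO_family M \<E> A \<longleftrightarrow>
     (\<forall>t\<ge>0. \<forall>E\<in>\<E>. E \<noteq> {} \<longrightarrow> CAO M E (A t E)) \<and>
     (\<forall>t\<ge>0. \<forall>f. A t {} f = \<infinity>)"

definition gen_level_measure ::
    "'a set set \<Rightarrow> (real \<Rightarrow> 'a set \<Rightarrow> ereal) \<Rightarrow> (real \<Rightarrow> 'a set \<Rightarrow> ('a \<Rightarrow> real) \<Rightarrow> ereal)
     \<Rightarrow> ('a \<Rightarrow> real) \<Rightarrow> real \<Rightarrow> ereal" where
  "gen_level_measure \<E> \<mu> A f t = Sup {\<mu> t E | E. E \<in> \<E> \<and> A t E f \<ge> ereal t}"

definition gen_survival ::
    "'a measure \<Rightarrow> 'a set set \<Rightarrow> (real \<Rightarrow> 'a set \<Rightarrow> ereal) \<Rightarrow> (real \<Rightarrow> 'a set \<Rightarrow> ('a \<Rightarrow> real) \<Rightarrow> ereal)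
     \<Rightarrow> ('a \<Rightarrow> real) \<Rightarrow> real \<Rightarrow> ereal" where
  "gen_survival M \<E> \<mu> A g s = Inf {\<mu> s (space M - E) | E. E \<in> \<E> \<and> A s E g \<le> ereal s}"

definition hat_mu :: "'a measure \<Rightarrow> real \<Rightarrow> (real \<Rightarrow> 'a set \<Rightarrow> ereal) \<Rightarrow> real \<Rightarrow> 'a set \<Rightarrow> ereal" where
  "hat_mu M b \<mu> t E = \<mu> 0 (space M) - \<mu> (max (b - t) 0) (space M - E)"

definition hat_A :: "'a measure \<Rightarrow> real \<Rightarrow> (real \<Rightarrow> 'a set \<Rightarrow> ('a \<Rightarrow> real) \<Rightarrow> ereal)
     \<Rightarrow> real \<Rightarrow> 'a set \<Rightarrow> ('a \<Rightarrow> real) \<Rightarrow> ereal" where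
  "hat_A M b A t E f = (if E = {} then 0
      else ereal b - A (max (b - t) 0) E (\<lambda>x. max (b * indicator (space M) x - f x) 0))"

end

theory Submission
  imports Defs
begin

theorem proposition3p23:
  fixes M :: "'a measure" and \<E> :: "'a set set" and b :: real
    and \<mu> :: "real \<Rightarrow> 'a set \<Rightarrow> ereal"
    and A :: "real \<Rightarrow> 'a set \<Rightarrow> ('a \<Rightarrow> real) \<Rightarrow> ereal"
  assumes "paving M \<E>"
    and "0 < b"
    and "\<forall>t\<ge>0. monotone_measure M (\<mu> t)"
    and "\<forall>t\<ge>0. \<mu> t (space M) = \<mu> 0 (space M)"
    and "\<mu> 0 (space M) < \<infinity>"
    and "param_CAO_family M \<E> A"
    and "\<forall>t\<ge>0. \<forall>E\<in>\<E>. E \<noteq> {} \<longrightarrow> A t E (\<lambda>x. b * indicator (space M) x) = ereal b"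
  shows "\<forall>t\<in>{0..b}. \<forall>f\<in>Fset M. (\<forall>x\<in>space M. f x \<le> b) \<longrightarrow>
           gen_level_measure \<E> \<mu> A f t =
             \<mu> 0 (space M) - gen_survival M \<E> (hat_mu M b \<mu>) (hat_A M b A)
                               (\<lambda>x. b * indicator (space M) x - f x) (b - t)"
proof (intro ballI impI)
  fix t f assume t: "t \<in> {0..b}" and fF: "f \<in> Fset M" and fb: "\<forall>x\<in>space M. f x \<le> b"
  define m where "m = \<mu> 0 (space M)"
  have t0: "0 \<le> t" using t by simp
  have mono: "monotone_measure M (\<mu> t)" using assms(3) t0 by blast
  have mt: "\<mu> t (space M) = m" using assms(4) t0 m_def by blast
  have m0: "0 \<le> m"
  proof -
    have "0 \<le> \<mu> t (space M)" using mono sets.top unfolding monotone_measure_def by blast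
    then show ?thesis using mt by simp
  qed
  have mfin: "\<bar>m\<bar> \<noteq> \<infinity>" using m0 assms(5) m_def by (cases m) auto
  define I where "I = {E. E \<in> \<E> \<and> A t E f \<ge> ereal t}"
  have sub: "\<E> \<subseteq> sets M" "{} \<in> \<E>" using assms(1) unfolding paving_def by auto
  have Ainf: "A t {} f = \<infinity>" using assms(6) t0 unfolding param_CAO_family_def by blast
  have "{} \<in> I" using sub(2) Ainf unfolding I_def by simp
  then have Inz: "I \<noteq> {}" by blast
  define h where "h = (\<lambda>x. max (b * indicator (space M) x - (b * indicator (space M) x - f x)) 0)"
  have hF: "h \<in> Fset M"
  proof -
    have "h = (\<lambda>x. max (f x) 0)" unfolding h_def by auto
    then show ?thesis using fF unfolding Fset_def
      by (auto intro!: borel_measurable_max)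
  qed
  have hA: "A t E h = A t E f" if "E \<in> \<E>" "E \<noteq> {}" for E
  proof -
    have cao: "CAO M E (A t E)" using assms(6) t that unfolding param_CAO_family_def by auto
    have Es: "E \<subseteq> space M" using sub that sets.sets_into_space by blast
    have eq: "\<forall>x\<in>E. h x = f x" using Es fF unfolding h_def Fset_def by auto
    show ?thesis using cao hF fF eq unfolding CAO_def
      by (metis order_antisym order_refl)
  qed
  have Anon: "A t E f \<ge> 0" if "E \<in> \<E>" "E \<noteq> {}" for E
    using assms(6) t that fF unfolding param_CAO_family_def CAO_def by auto
  have cond: "(hat_A M b A (b - t) E (\<lambda>x. b * indicator (space M) x - f x) \<le> ereal (b - t))
      \<longleftrightarrow> A t E f \<ge> ereal t" if "E \<in> \<E>" for E
  proof (cases "E = {}")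
    case True
    then show ?thesis using t assms(6) unfolding hat_A_def param_CAO_family_def by auto
  next
    case False
    have mx: "max (b - (b - t)) 0 = t" using t by auto
    have "hat_A M b A (b - t) E (\<lambda>x. b * indicator (space M) x - f x) = ereal b - A t E f"
      unfolding hat_A_def using False mx hA[OF that False] h_def by simp
    moreover have "(ereal b - A t E f \<le> ereal (b - t)) \<longleftrightarrow> A t E f \<ge> ereal t"
      using Anon[OF that False] by (cases "A t E f") auto
    ultimately show ?thesis by simp
  qed
  have hm: "hat_mu M b \<mu> (b - t) (space M - E) = m - \<mu> t E" if "E \<in> \<E>" for E
  proof -
    have "space M - (space M - E) = E" using sub that sets.sets_into_space by blast
    moreover have "max (b - (b - t)) 0 = t" using t by auto
    ultimately show ?thesis unfolding hat_mu_def m_def by simp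
  qed
  let ?g = "\<lambda>x. b * indicator (space M) x - f x"
  have seteq: "{hat_mu M b \<mu> (b - t) (space M - E) |E. E \<in> \<E> \<and> hat_A M b A (b - t) E ?g \<le> ereal (b - t)}
      = (\<lambda>E. m - \<mu> t E) ` I"
  proof (intro set_eqI iffI)
    fix y assume "y \<in> {hat_mu M b \<mu> (b - t) (space M - E) |E. E \<in> \<E> \<and> hat_A M b A (b - t) E ?g \<le> ereal (b - t)}"
    then obtain E where E: "E \<in> \<E>" "hat_A M b A (b - t) E ?g \<le> ereal (b - t)"
      "y = hat_mu M b \<mu> (b - t) (space M - E)" by blast
    have "E \<in> I" using E(1,2) cond[OF E(1)] unfolding I_def by blast
    moreover have "y = m - \<mu> t E" using E(3) hm[OF E(1)] by simp
    ultimately show "y \<in> (\<lambda>E. m - \<mu> t E) ` I" by blast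
  next
    fix y assume "y \<in> (\<lambda>E. m - \<mu> t E) ` I"
    then obtain E where E: "E \<in> I" "y = m - \<mu> t E" by blast
    have E1: "E \<in> \<E>" and E2: "A t E f \<ge> ereal t" using E(1) unfolding I_def by auto
    have "hat_A M b A (b - t) E ?g \<le> ereal (b - t)" using cond[OF E1] E2 by blast
    moreover have "y = hat_mu M b \<mu> (b - t) (space M - E)" using E(2) hm[OF E1] by simp
    ultimately show "y \<in> {hat_mu M b \<mu> (b - t) (space M - E) |E. E \<in> \<E> \<and> hat_A M b A (b - t) E ?g \<le> ereal (b - t)}"
      using E1 by blast
  qed
  have surv: "gen_survival M \<E> (hat_mu M b \<mu>) (hat_A M b A) ?g (b - t) = (INF E\<in>I. m - \<mu> t E)"
    unfolding gen_survival_def seteq ..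
  have leveq: "{\<mu> t E |E. E \<in> \<E> \<and> A t E f \<ge> ereal t} = (\<lambda>E. \<mu> t E) ` I"
    unfolding I_def by blast
  have lev: "gen_level_measure \<E> \<mu> A f t = (SUP E\<in>I. \<mu> t E)"
    unfolding gen_level_measure_def leveq ..
  have bnd: "0 \<le> \<mu> t E \<and> \<mu> t E \<le> m" if "E \<in> I" for E
  proof -
    have ES: "E \<in> sets M" using that sub unfolding I_def by blast
    have "0 \<le> \<mu> t E" using mono ES unfolding monotone_measure_def by blast
    moreover have "\<mu> t E \<le> \<mu> t (space M)"
      using mono ES sets.top sets.sets_into_space[OF ES] unfolding monotone_measure_def by blast
    ultimately show ?thesis using mt by simp
  qed
  have S0: "0 \<le> (SUP E\<in>I. \<mu> t E)" using Inz bnd by (meson SUP_upper2 ex_in_conv)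
  have S1: "(SUP E\<in>I. \<mu> t E) \<le> m" using bnd by (simp add: SUP_least)
  have "m - (INF E\<in>I. m - \<mu> t E) = m - (m - (SUP E\<in>I. \<mu> t E))"
    using INF_ereal_minus_right[OF Inz mfin] by simp
  also have "\<dots> = (SUP E\<in>I. \<mu> t E)" using S0 S1 mfin
    by (cases m; cases "SUP E\<in>I. \<mu> t E") auto
  finally show "gen_level_measure \<E> \<mu> A f t = \<mu> 0 (space M) - gen_survival M \<E> (hat_mu M b \<mu>) (hat_A M b A)
                               (\<lambda>x. b * indicator (space M) x - f x) (b - t)"
    using lev surv m_def by simp
qed

end
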